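(* Let $S$ be a semigroup and $A=(\mu_A,\nu_A)$ an IF subset of $S$. Then $A$ is an IF semiprime ideal of $S$ if and only if $\underline{A}$ is a semiprime ideal of the semigroup $(\underline{S},\circ)$.
   Context: An intuitionistic fuzzy (IF) subset of $S$ is a pair $A=(\mu_A,\nu_A)$ of functions $S\to[0,1]$ with $\mu_A(x)+\nu_A(x)\le1$ for all $x$. $A$ is an IF ideal of $S$ if $\mu_A(xy)\ge\max\{\mu_A(x),\mu_A(y)\}$ and $\nu_A(xy)\le\min\{\nu_A(x),\nu_A(y)\}$ for all $x,y\in S$; an IF semiprime ideal is an IF ideal with $\mu_A(x)\ge\mu_A(x^2)$ and $\nu_A(x)\le\nu_A(x^2)$ for all $x\in S$. For $x\in S$ and $\alpha,\beta\in[0,1]$ with $\alpha+\beta\le1$, the IF point $x_{(\alpha,\beta)}$ is the IF subset of $S$ with value $(\alpha,\beta)$ at $x$ and $(0,1)$ elsewhere (so all points $x_{(0,1)}$ coincide). $\underline{S}$ is the set of all IF points of $S$; it is a semigroup under $x_{(\alpha,\beta)}\circ y_{(\gamma,\delta)}=(xy)_{(\min(\alpha,\gamma),\max(\beta,\delta))}$. For an IF subset $A$, $\underline{A}=\{x_{(\alpha,\beta)}\in\underline{S}:\mu_A(x)\ge\alpha,\ \nu_A(x)\le\beta\}$. In a semigroup $T$, an ideal is a non-empty $I\subseteq T$ with $TI\subseteq I$ and $IT\subseteq I$; here a semiprime ideal of $T$ means an ideal $I$ such that for every $t\in T$, $t^2\in I$ implies $t\in I$. *)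

theory Defs
  imports Main "HOL.Real"
begin

definition IF_subset :: "('a \<Rightarrow> real) \<Rightarrow> ('a \<Rightarrow> real) \<Rightarrow> bool" where
  "IF_subset mu nu \<longleftrightarrow>
     (\<forall>x. 0 \<le> mu x \<and> mu x \<le> 1 \<and> 0 \<le> nu x \<and> nu x \<le> 1 \<and> mu x + nu x \<le> 1)"

definition IF_ideal :: "('a::semigroup_mult \<Rightarrow> real) \<Rightarrow> ('a \<Rightarrow> real) \<Rightarrow> bool" where
  "IF_ideal mu nu \<longleftrightarrow> IF_subset mu nu \<and>
     (\<forall>x y. mu (x * y) \<ge> max (mu x) (mu y) \<and> nu (x * y) \<le> min (nu x) (nu y))"

definition IF_semiprime_ideal :: "('a::semigroup_mult \<Rightarrow> real) \<Rightarrow> ('a \<Rightarrow> real) \<Rightarrow> bool" where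
  "IF_semiprime_ideal mu nu \<longleftrightarrow> IF_ideal mu nu \<and>
     (\<forall>x. mu x \<ge> mu (x * x) \<and> nu x \<le> nu (x * x))"

text \<open>IF points, represented as the IF subsets they are (so all x_(0,1) coincide).\<close>

type_synonym 'a ifset = "('a \<Rightarrow> real) \<times> ('a \<Rightarrow> real)"

definition IF_point :: "'a \<Rightarrow> real \<Rightarrow> real \<Rightarrow> 'a ifset" where
  "IF_point x \<alpha> \<beta> = ((\<lambda>y. if y = x then \<alpha> else 0), (\<lambda>y. if y = x then \<beta> else 1))"

definition valid_pair :: "real \<Rightarrow> real \<Rightarrow> bool" where
  "valid_pair \<alpha> \<beta> \<longleftrightarrow> 0 \<le> \<alpha> \<and> \<alpha> \<le> 1 \<and> 0 \<le> \<beta> \<and> \<beta> \<le> 1 \<and> \<alpha> + \<beta> \<le> 1"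

definition IF_points :: "'a ifset set" where
  "IF_points = {IF_point x \<alpha> \<beta> | x \<alpha> \<beta>. valid_pair \<alpha> \<beta>}"

text \<open>The product of IF points: x_(a,b) o y_(c,d) = (xy)_(min a c, max b d).
  (Well defined, since the only identification among points is that of all x_(0,1).)\<close>
definition IF_point_mult :: "'a::semigroup_mult ifset \<Rightarrow> 'a ifset \<Rightarrow> 'a ifset" where
  "IF_point_mult P Q = (THE R. \<exists>x \<alpha> \<beta> y \<gamma> \<delta>. valid_pair \<alpha> \<beta> \<and> valid_pair \<gamma> \<delta> \<and>
      P = IF_point x \<alpha> \<beta> \<and> Q = IF_point y \<gamma> \<delta> \<and>
      R = IF_point (x * y) (min \<alpha> \<gamma>) (max \<beta> \<delta>))"

definition IF_points_of :: "('a \<Rightarrow> real) \<Rightarrow> ('a \<Rightarrow> real) \<Rightarrow> 'a ifset set" where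
  "IF_points_of mu nu = {IF_point x \<alpha> \<beta> | x \<alpha> \<beta>. valid_pair \<alpha> \<beta> \<and> mu x \<ge> \<alpha> \<and> nu x \<le> \<beta>}"

definition sg_ideal :: "'b set \<Rightarrow> ('b \<Rightarrow> 'b \<Rightarrow> 'b) \<Rightarrow> 'b set \<Rightarrow> bool" where
  "sg_ideal T f I \<longleftrightarrow> I \<noteq> {} \<and> I \<subseteq> T \<and> (\<forall>t\<in>T. \<forall>i\<in>I. f t i \<in> I \<and> f i t \<in> I)"

definition sg_semiprime_ideal :: "'b set \<Rightarrow> ('b \<Rightarrow> 'b \<Rightarrow> 'b) \<Rightarrow> 'b set \<Rightarrow> bool" where
  "sg_semiprime_ideal T f I \<longleftrightarrow> sg_ideal T f I \<and> (\<forall>t\<in>T. f t t \<in> I \<longrightarrow> t \<in> I)"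

end

theory Submission
  imports Defs
begin

lemma pt_zero: "IF_point x 0 1 = IF_point y 0 1"
  by (auto simp: IF_point_def)

lemma pt_eq:
  assumes "IF_point x a b = IF_point y c d"
  shows "(a = 0 \<and> b = 1 \<and> c = 0 \<and> d = 1) \<or> (x = y \<and> a = c \<and> b = d)"
proof (cases "x = y")
  case True
  have "fst (IF_point x a b) x = fst (IF_point y c d) x"
       "snd (IF_point x a b) x = snd (IF_point y c d) x" using assms by auto
  then show ?thesis using True by (simp add: IF_point_def)
next
  case False
  have "fst (IF_point x a b) x = fst (IF_point y c d) x"
       "snd (IF_point x a b) x = snd (IF_point y c d) x"
       "fst (IF_point x a b) y = fst (IF_point y c d) y"
       "snd (IF_point x a b) y = snd (IF_point y c d) y" using assms by auto
  then show ?thesis using False by (simp add: IF_point_def)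
qed

lemma valid_minmax: "valid_pair a b \<Longrightarrow> valid_pair c d \<Longrightarrow> valid_pair (min a c) (max b d)"
  by (auto simp: valid_pair_def min_def max_def)

lemma pt_mult:
  fixes x y :: "'a::semigroup_mult"
  assumes "valid_pair a b" "valid_pair c d"
  shows "IF_point_mult (IF_point x a b) (IF_point y c d) = IF_point (x * y) (min a c) (max b d)"
  unfolding IF_point_mult_def
proof (rule the_equality)
  show "\<exists>x' \<alpha> \<beta> y' \<gamma> \<delta>. valid_pair \<alpha> \<beta> \<and> valid_pair \<gamma> \<delta> \<and>
      IF_point x a b = IF_point x' \<alpha> \<beta> \<and> IF_point y c d = IF_point y' \<gamma> \<delta> \<and>
      IF_point (x * y) (min a c) (max b d) = IF_point (x' * y') (min \<alpha> \<gamma>) (max \<beta> \<delta>)"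
    using assms by blast
next
  fix R
  assume "\<exists>x' \<alpha> \<beta> y' \<gamma> \<delta>. valid_pair \<alpha> \<beta> \<and> valid_pair \<gamma> \<delta> \<and>
      IF_point x a b = IF_point x' \<alpha> \<beta> \<and> IF_point y c d = IF_point y' \<gamma> \<delta> \<and>
      R = IF_point (x' * y') (min \<alpha> \<gamma>) (max \<beta> \<delta>)"
  then obtain x' \<alpha> \<beta> y' \<gamma> \<delta> where v: "valid_pair \<alpha> \<beta>" "valid_pair \<gamma> \<delta>"
    and e1: "IF_point x a b = IF_point x' \<alpha> \<beta>" and e2: "IF_point y c d = IF_point y' \<gamma> \<delta>"
    and R: "R = IF_point (x' * y') (min \<alpha> \<gamma>) (max \<beta> \<delta>)" by blast
  show "R = IF_point (x * y) (min a c) (max b d)"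
  proof (cases "a = 0 \<and> b = 1 \<and> \<alpha> = 0 \<and> \<beta> = 1")
    case True
    have "min a c = 0" "max b d = 1" "min \<alpha> \<gamma> = 0" "max \<beta> \<delta> = 1"
      using True assms v by (auto simp: valid_pair_def)
    then show ?thesis unfolding R by (simp add: pt_zero)
  next
    case F1: False
    have h1: "x = x'" "a = \<alpha>" "b = \<beta>" using pt_eq[OF e1] F1 by blast+
    show ?thesis
    proof (cases "c = 0 \<and> d = 1 \<and> \<gamma> = 0 \<and> \<delta> = 1")
      case True
      have "min a c = 0" "max b d = 1" "min \<alpha> \<gamma> = 0" "max \<beta> \<delta> = 1"
        using True assms v by (auto simp: valid_pair_def)
      then show ?thesis unfolding R by (simp add: pt_zero)
    next
      case F2: False
      have h2: "y = y'" "c = \<gamma>" "d = \<delta>" using pt_eq[OF e2] F2 by blast+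
      show ?thesis unfolding R h1 h2 ..
    qed
  qed
qed

lemma pt_mem:
  assumes "IF_subset mu nu" "valid_pair a b"
  shows "IF_point x a b \<in> IF_points_of mu nu \<longleftrightarrow> (a = 0 \<and> b = 1) \<or> (mu x \<ge> a \<and> nu x \<le> b)"
proof
  assume "IF_point x a b \<in> IF_points_of mu nu"
  then obtain x' a' b' where "IF_point x a b = IF_point x' a' b'" "mu x' \<ge> a'" "nu x' \<le> b'"
    unfolding IF_points_of_def by blast
  note e = this
  show "(a = 0 \<and> b = 1) \<or> (mu x \<ge> a \<and> nu x \<le> b)"
  proof (cases "a = 0 \<and> b = 1")
    case False
    then have "x = x'" "a = a'" "b = b'" using pt_eq[OF e(1)] by blast+
    then show ?thesis using e by simp
  qed simp
next
  assume h: "(a = 0 \<and> b = 1) \<or> (mu x \<ge> a \<and> nu x \<le> b)"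
  show "IF_point x a b \<in> IF_points_of mu nu"
  proof (cases "a = 0 \<and> b = 1")
    case True
    have "0 \<le> mu x" "nu x \<le> 1" using assms(1) by (auto simp: IF_subset_def)
    then have "valid_pair 0 1 \<and> mu x \<ge> 0 \<and> nu x \<le> 1" by (simp add: valid_pair_def)
    then have "IF_point x 0 1 \<in> IF_points_of mu nu" unfolding IF_points_of_def by blast
    then show ?thesis using True by simp
  next
    case False
    then show ?thesis using h assms(2) unfolding IF_points_of_def by blast
  qed
qed

lemma pts_mem: "valid_pair a b \<Longrightarrow> IF_point x a b \<in> IF_points"
  unfolding IF_points_def by blast

theorem theorem3p17:
  fixes mu nu :: "'a::semigroup_mult \<Rightarrow> real"
  assumes "IF_subset mu nu"
  shows "IF_semiprime_ideal mu nu \<longleftrightarrow>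
         sg_semiprime_ideal IF_points IF_point_mult (IF_points_of mu nu)"
proof
  have sub: "\<And>x. 0 \<le> mu x \<and> mu x \<le> 1 \<and> 0 \<le> nu x \<and> nu x \<le> 1 \<and> mu x + nu x \<le> 1"
    using assms by (simp add: IF_subset_def)
  assume H: "IF_semiprime_ideal mu nu"
  have I: "\<And>x y. mu (x * y) \<ge> max (mu x) (mu y) \<and> nu (x * y) \<le> min (nu x) (nu y)"
   and SP: "\<And>x. mu x \<ge> mu (x * x) \<and> nu x \<le> nu (x * x)"
    using H by (auto simp: IF_semiprime_ideal_def IF_ideal_def)
  have ne: "IF_point undefined 0 1 \<in> IF_points_of mu nu"
    using pt_mem[OF assms, of 0 1] by (simp add: valid_pair_def)
  have ss: "IF_points_of mu nu \<subseteq> IF_points"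
    unfolding IF_points_of_def IF_points_def by blast
  have id: "\<forall>t\<in>(IF_points :: 'a ifset set). \<forall>i\<in>IF_points_of mu nu.
      IF_point_mult t i \<in> IF_points_of mu nu \<and> IF_point_mult i t \<in> IF_points_of mu nu"
  proof (intro ballI)
    fix t i :: "'a ifset" assume t: "t \<in> IF_points" and i: "i \<in> IF_points_of mu nu"
    from t obtain y c d where t': "t = IF_point y c d" "valid_pair c d"
      unfolding IF_points_def by blast
    from i obtain x a b where i': "i = IF_point x a b" "valid_pair a b" "mu x \<ge> a" "nu x \<le> b"
      unfolding IF_points_of_def by blast
    have "mu (y * x) \<ge> mu x" "nu (y*x) \<le> nu x" "mu (x*y) \<ge> mu x" "nu (x*y) \<le> nu x"
      using I[of y x] I[of x y] by auto
    moreover have "IF_point_mult t i = IF_point (y*x) (min c a) (max d b)"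
      "IF_point_mult i t = IF_point (x*y) (min a c) (max b d)"
      using t' i' pt_mult by auto
    ultimately show "IF_point_mult t i \<in> IF_points_of mu nu \<and> IF_point_mult i t \<in> IF_points_of mu nu"
      using pt_mem[OF assms valid_minmax[OF t'(2) i'(2)], of "y*x"]
        pt_mem[OF assms valid_minmax[OF i'(2) t'(2)], of "x*y"] i'(3,4)
      by (auto simp: min_def max_def)
  qed
  have spp: "\<forall>t\<in>(IF_points :: 'a ifset set). IF_point_mult t t \<in> IF_points_of mu nu \<longrightarrow> t \<in> IF_points_of mu nu"
  proof (intro ballI impI)
    fix t :: "'a ifset" assume t: "t \<in> IF_points" and m: "IF_point_mult t t \<in> IF_points_of mu nu"
    from t obtain x a b where t': "t = IF_point x a b" "valid_pair a b"
      unfolding IF_points_def by blast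
    have "IF_point_mult t t = IF_point (x*x) a b" using t' pt_mult[OF t'(2) t'(2)] by simp
    hence "IF_point (x*x) a b \<in> IF_points_of mu nu" using m by simp
    hence "(a = 0 \<and> b = 1) \<or> (mu (x*x) \<ge> a \<and> nu (x*x) \<le> b)"
      using pt_mem[OF assms t'(2)] by simp
    moreover have "mu (x * x) \<le> mu x" "nu x \<le> nu (x * x)" using SP[of x] by auto
    ultimately have "(a = 0 \<and> b = 1) \<or> (mu x \<ge> a \<and> nu x \<le> b)" by linarith
    then show "t \<in> IF_points_of mu nu"
      using t' pt_mem[OF assms t'(2), of x] by simp
  qed
  show "sg_semiprime_ideal IF_points IF_point_mult (IF_points_of mu nu)"
    unfolding sg_semiprime_ideal_def sg_ideal_def using ne ss id spp by blast
next
  have sub: "\<And>x. 0 \<le> mu x \<and> mu x \<le> 1 \<and> 0 \<le> nu x \<and> nu x \<le> 1 \<and> mu x + nu x \<le> 1"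
    using assms by (simp add: IF_subset_def)
  have vx: "\<And>x. valid_pair (mu x) (nu x)" using sub by (simp add: valid_pair_def)
  have v10: "valid_pair 1 0" by (simp add: valid_pair_def)
  have memx: "\<And>x. IF_point x (mu x) (nu x) \<in> IF_points_of mu nu"
    using pt_mem[OF assms vx] by simp
  assume H: "sg_semiprime_ideal IF_points IF_point_mult (IF_points_of mu nu)"
  hence HI: "\<And>t i. t \<in> IF_points \<Longrightarrow> i \<in> IF_points_of mu nu \<Longrightarrow>
      IF_point_mult t i \<in> IF_points_of mu nu \<and> IF_point_mult i t \<in> IF_points_of mu nu"
   and HS: "\<And>t. t \<in> IF_points \<Longrightarrow> IF_point_mult t t \<in> IF_points_of mu nu \<Longrightarrow> t \<in> IF_points_of mu nu"
    unfolding sg_semiprime_ideal_def sg_ideal_def by blast+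
  have L: "mu (y * x) \<ge> mu x \<and> nu (y * x) \<le> nu x \<and> mu (x * y) \<ge> mu x \<and> nu (x * y) \<le> nu x" for x y :: 'a
  proof -
    have "IF_point_mult (IF_point y 1 0) (IF_point x (mu x) (nu x)) \<in> IF_points_of mu nu \<and>
          IF_point_mult (IF_point x (mu x) (nu x)) (IF_point y 1 0) \<in> IF_points_of mu nu"
      using HI[OF pts_mem[OF v10] memx] .
    note hh = this
    have "IF_point (y*x) (mu x) (nu x) \<in> IF_points_of mu nu \<and>
               IF_point (x*y) (mu x) (nu x) \<in> IF_points_of mu nu"
    proof -
      have "min 1 (mu x) = mu x" "max 0 (nu x) = nu x" "min (mu x) 1 = mu x" "max (nu x) 0 = nu x"
        using sub[of x] by auto
      then show ?thesis using hh pt_mult[OF v10 vx[of x], of y x] pt_mult[OF vx[of x] v10, of x y]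
        by simp
    qed
    then show ?thesis using pt_mem[OF assms vx[of x], of "y*x"] pt_mem[OF assms vx[of x], of "x*y"]
      sub[of x] sub[of "y*x"] sub[of "x*y"] by auto
  qed
  have S: "mu x \<ge> mu (x * x) \<and> nu x \<le> nu (x * x)" for x :: 'a
  proof -
    have "IF_point_mult (IF_point x (mu (x*x)) (nu (x*x))) (IF_point x (mu (x*x)) (nu (x*x)))
        = IF_point (x*x) (mu (x*x)) (nu (x*x))"
      using pt_mult[OF vx[of "x*x"] vx[of "x*x"], of x x] by simp
    then have "IF_point x (mu (x*x)) (nu (x*x)) \<in> IF_points_of mu nu"
      using HS[OF pts_mem[OF vx[of "x*x"], of x]] memx[of "x*x"] by simp
    then show ?thesis using pt_mem[OF assms vx[of "x*x"], of x] sub[of x] by auto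
  qed
  have LL: "\<forall>x y. max (mu x) (mu y) \<le> mu (x * y) \<and> nu (x * y) \<le> min (nu x) (nu y)"
  proof (intro allI)
    fix x y :: 'a
    have "mu x \<le> mu (x*y)" "mu y \<le> mu (x*y)" "nu (x*y) \<le> nu x" "nu (x*y) \<le> nu y"
      using L[of x y] L[of y x] by simp_all
    then show "max (mu x) (mu y) \<le> mu (x * y) \<and> nu (x * y) \<le> min (nu x) (nu y)" by simp
  qed
  have SS: "\<forall>x. mu (x * x) \<le> mu x \<and> nu x \<le> nu (x * x)" using S by blast
  show "IF_semiprime_ideal mu nu"
    unfolding IF_semiprime_ideal_def IF_ideal_def using assms LL SS by blast
qed

end
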